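(* Let $\kappa>0$ and let $Z$ be a $\kappa$-self-similar Markov process with transition function $P$. Let $(G_{s,t})_{0<s\le t}$ be a family of probability distributions on $(0,1]$ with $G_{s,s}=\delta_1$ (the Dirac mass at $1$), such that for every bounded measurable function $h$ and all $0<s\le t\le u$, \[ \int\int h(ab)\,G_{s,t}(\mathrm{d}a)\,G_{t,u}(\mathrm{d}b)=\int h(r)\,G_{s,u}(\mathrm{d}r). \] Define $\widetilde P(0,t,0,\mathrm{d}y)=P(0,t,0,\mathrm{d}y)$ and, for $0<s\le t$, \[ \widetilde P(s,t,x,\mathrm{d}y)=\int P\bigl(rt,t,(t/s)^{\kappa}r^{\kappa}x,\mathrm{d}y\bigr)\,G_{s,t}(\mathrm{d}r). \] Then $\widetilde P$ is a transition function: each $\widetilde P(s,t,x,\cdot)$ is a probability measure, $x\mapsto\widetilde P(s,t,x,B)$ is measurable, $\widetilde P(s,s,x,\cdot)=\delta_x$, and the Chapman–Kolmogorov equations hold.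
   Context: A real-valued càdlàg Markov process $Z=(Z_t)_{t\ge0}$ is $\kappa$-self-similar if $(Z_{ct})_{t\ge0}$ and $(c^\kappa Z_t)_{t\ge0}$ have the same finite-dimensional distributions for every $c>0$ (so $Z_0=0$). Its transition function is $P(s,t,x,\mathrm{d}y)=\mathbb{P}(Z_t\in\mathrm{d}y\mid Z_s=x)$, which satisfies $P(cs,ct,c^\kappa x,c^\kappa\,\mathrm{d}y)=P(s,t,x,\mathrm{d}y)$ for all $c>0$, where $\int g(y)M(c\,\mathrm{d}y):=\int g(y/c)M(\mathrm{d}y)$. *)

theory Defs
  imports "HOL-Probability.Probability"
begin

text \<open>Since the process starts at 0 (self-similarity forces Z_0 = 0), at the
  initial time s = 0 only the starting point x = 0 is relevant.\<close>

definition admissible :: "real \<Rightarrow> real \<Rightarrow> bool" where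
  "admissible s x \<longleftrightarrow> 0 \<le> s \<and> (s = 0 \<longrightarrow> x = 0)"

definition transition_function :: "(real \<Rightarrow> real \<Rightarrow> real \<Rightarrow> real measure) \<Rightarrow> bool" where
  "transition_function Q \<longleftrightarrow>
     (\<forall>s t x. admissible s x \<and> s \<le> t \<longrightarrow>
        prob_space (Q s t x) \<and> sets (Q s t x) = sets borel) \<and>
     (\<forall>s t B. 0 < s \<and> s \<le> t \<and> B \<in> sets borel \<longrightarrow>
        (\<lambda>x. emeasure (Q s t x) B) \<in> borel_measurable borel) \<and>
     (\<forall>s x. admissible s x \<longrightarrow> Q s s x = return borel x) \<and>
     (\<forall>s t u x B. admissible s x \<and> s \<le> t \<and> t \<le> u \<and> B \<in> sets borel \<longrightarrow>
        emeasure (Q s u x) B = (\<integral>\<^sup>+ y. emeasure (Q t u y) B \<partial>(Q s t x)))"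

text \<open>Self-similarity of the transition function:
  P(cs, ct, c^\<kappa> x, c^\<kappa> dy) = P(s, t, x, dy), where M(c dy) is the image of M
  under y \<mapsto> y / c.\<close>

definition self_similar_tf :: "real \<Rightarrow> (real \<Rightarrow> real \<Rightarrow> real \<Rightarrow> real measure) \<Rightarrow> bool" where
  "self_similar_tf \<kappa> Q \<longleftrightarrow>
     (\<forall>c s t x. 0 < c \<and> admissible s x \<and> s \<le> t \<longrightarrow>
        distr (Q (c * s) (c * t) (c powr \<kappa> * x)) borel (\<lambda>y. y / c powr \<kappa>) = Q s t x)"

definition Ptil :: "real \<Rightarrow> (real \<Rightarrow> real \<Rightarrow> real \<Rightarrow> real measure) \<Rightarrow> (real \<Rightarrow> real \<Rightarrow> real measure)
                     \<Rightarrow> real \<Rightarrow> real \<Rightarrow> real \<Rightarrow> real measure" where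
  "Ptil \<kappa> P G s t x =
     (if s = 0 then P 0 t 0
      else measure_of UNIV (sets borel)
             (\<lambda>B. \<integral>\<^sup>+ r. emeasure (P (r * t) t ((t / s) powr \<kappa> * r powr \<kappa> * x)) B \<partial>(G s t)))"

end

theory Submission
  imports Defs
begin

lemma GN:
  fixes G :: "real \<Rightarrow> real \<Rightarrow> real measure" and h :: "real \<Rightarrow> real"
  assumes pst: "prob_space (G s t)" and ptu: "prob_space (G t u)" and psu: "prob_space (G s u)"
    and sst: "sets (G s t) = sets borel" and stu: "sets (G t u) = sets borel"
    and ssu: "sets (G s u) = sets borel"
    and comp: "(\<integral>a. (\<integral>b. h (a*b) \<partial>G t u) \<partial>G s t) = (\<integral>r. h r \<partial>G s u)"
    and hm: "h \<in> borel_measurable borel" and hb0: "\<And>y. 0 \<le> h y" and hb1: "\<And>y. h y \<le> 1"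
  shows "(\<integral>\<^sup>+a. \<integral>\<^sup>+b. ennreal (h (a*b)) \<partial>G t u \<partial>G s t) = (\<integral>\<^sup>+r. ennreal (h r) \<partial>G s u)"
proof -
  interpret A: prob_space "G s t" by fact
  interpret B: prob_space "G t u" by fact
  interpret C: prob_space "G s u" by fact
  have m2: "(\<lambda>(a,b). h (a*b)) \<in> borel_measurable (G s t \<Otimes>\<^sub>M G t u)"
    using hm by (simp add: measurable_cong_sets[OF sets_pair_measure_cong[OF sst stu] refl])
  have m1: "(\<lambda>b. h (a*b)) \<in> borel_measurable (G t u)" for a
    using hm by (simp add: measurable_cong_sets[OF stu refl])
  have i1: "integrable (G t u) (\<lambda>b. h (a*b))" for a
    by (rule B.integrable_const_bound[where B=1]) (auto simp: m1 hb0 hb1 abs_le_iff intro: order_trans[OF _ hb1] order_trans[OF _ hb0])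
  have e1: "(\<integral>\<^sup>+b. ennreal (h (a*b)) \<partial>G t u) = ennreal (\<integral>b. h (a*b) \<partial>G t u)" for a
    by (rule nn_integral_eq_integral[OF i1]) (simp add: hb0)
  define F where "F a = (\<integral>b. h (a*b) \<partial>G t u)" for a
  have Fm: "F \<in> borel_measurable (G s t)"
    unfolding F_def by (rule B.borel_measurable_lebesgue_integral) (use m2 in simp)
  have F0: "0 \<le> F a" for a unfolding F_def by (rule integral_nonneg_AE) (simp add: hb0)
  have F1: "F a \<le> 1" for a unfolding F_def by (rule B.integral_le_const[OF i1]) (simp add: hb1)
  have iF: "integrable (G s t) F"
    by (rule A.integrable_const_bound[where B=1]) (auto simp: Fm F0 F1 abs_le_iff intro: order_trans[OF _ F1] order_trans[OF _ F0])
  have ih: "integrable (G s u) h"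
    by (rule C.integrable_const_bound[where B=1]) (auto simp: measurable_cong_sets[OF ssu refl] hm hb0 hb1 abs_le_iff intro: order_trans[OF _ hb1] order_trans[OF _ hb0])
  have "(\<integral>\<^sup>+a. \<integral>\<^sup>+b. ennreal (h (a*b)) \<partial>G t u \<partial>G s t) = (\<integral>\<^sup>+a. ennreal (F a) \<partial>G s t)"
    by (simp add: e1 F_def)
  also have "\<dots> = ennreal (\<integral>a. F a \<partial>G s t)"
    by (rule nn_integral_eq_integral[OF iF]) (simp add: F0)
  also have "\<dots> = ennreal (\<integral>r. h r \<partial>G s u)" using comp by (simp add: F_def)
  also have "\<dots> = (\<integral>\<^sup>+r. ennreal (h r) \<partial>G s u)"
    by (rule nn_integral_eq_integral[OF ih, symmetric]) (simp add: hb0)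
  finally show ?thesis .
qed


lemma measP:
  fixes P :: "real \<Rightarrow> real \<Rightarrow> real \<Rightarrow> real measure"
  assumes Pm: "(\<lambda>(s, x). emeasure (P s t x) B) \<in> borel_measurable (restrict_space borel {0<..t} \<Otimes>\<^sub>M borel)"
    and f: "f \<in> borel_measurable M" and g: "g \<in> borel_measurable M"
    and fpos: "\<And>w. w \<in> space M \<Longrightarrow> 0 < f w \<and> f w \<le> t"
  shows "(\<lambda>w. emeasure (P (f w) t (g w)) B) \<in> borel_measurable M"
proof -
  have "(\<lambda>w. (f w, g w)) \<in> M \<rightarrow>\<^sub>M restrict_space borel {0<..t} \<Otimes>\<^sub>M borel"
    by (intro measurable_Pair measurable_restrict_space2) (auto simp: f g fpos)
  from measurable_compose[OF this Pm] show ?thesis by simp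
qed

lemma Lscale:
  fixes P :: "real \<Rightarrow> real \<Rightarrow> real \<Rightarrow> real measure"
  assumes P_tf: "transition_function P" and P_ss: "self_similar_tf \<kappa> P"
    and P_meas: "\<And>t B. 0 < t \<Longrightarrow> B \<in> sets borel \<Longrightarrow>
        (\<lambda>(s, x). emeasure (P s t x) B) \<in> borel_measurable (restrict_space borel {0<..t} \<Otimes>\<^sub>M borel)"
    and adm: "admissible s1 z" and st: "s1 \<le> t" and t0: "0 < t" and tu: "t \<le> u"
    and b0: "0 < b" and b1: "b \<le> 1" and B: "B \<in> sets borel"
  shows "(\<integral>\<^sup>+y. emeasure (P (b*u) u ((u/t) powr \<kappa> * b powr \<kappa> * y)) B \<partial>P s1 t z)
       = emeasure (P ((b*u/t)* s1) u ((b*u/t) powr \<kappa> * z)) B"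
proof -
  define c where "c = b*u/t"
  have c0: "0 < c" using b0 t0 tu by (simp add: c_def)
  have ss: "distr (P (c* s1) (c*t) (c powr \<kappa> * z)) borel (\<lambda>y. y / c powr \<kappa>) = P s1 t z"
    using P_ss adm st c0 unfolding self_similar_tf_def by auto
  have ct: "c*t = b*u" using t0 by (simp add: c_def)
  have adm2: "admissible (c* s1) (c powr \<kappa> * z)" using adm c0 unfolding admissible_def by auto
  have cs: "c* s1 \<le> b*u" using st c0 ct by (metis mult_left_mono less_imp_le)
  have bu: "b*u \<le> u" using b1 t0 tu by (simp add: mult_le_cancel_right1)
  have sets: "sets (P (c* s1) (b*u) (c powr \<kappa> * z)) = sets borel"
    using P_tf adm2 cs unfolding transition_function_def by auto
  have CK: "emeasure (P (c* s1) u (c powr \<kappa> * z)) B = (\<integral>\<^sup>+ y. emeasure (P (b*u) u y) B \<partial>P (c* s1) (b*u) (c powr \<kappa> * z))"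
    using P_tf adm2 cs bu B unfolding transition_function_def by auto
  have cp: "(u/t) powr \<kappa> * b powr \<kappa> = c powr \<kappa>"
  proof -
    have "c = b * (u/t)" by (simp add: c_def)
    hence "c powr \<kappa> = b powr \<kappa> * (u/t) powr \<kappa>" using b0 t0 tu by (simp only: powr_mult)
    thus ?thesis by (simp add: mult.commute)
  qed
  have cp0: "c powr \<kappa> > 0" using c0 by simp
  have fm: "(\<lambda>y. emeasure (P (b*u) u ((u/t) powr \<kappa> * b powr \<kappa> * y)) B) \<in> borel_measurable borel"
    by (rule measP[OF P_meas]) (use t0 tu b0 bu B in auto)
  have "(\<integral>\<^sup>+y. emeasure (P (b*u) u ((u/t) powr \<kappa> * b powr \<kappa> * y)) B \<partial>P s1 t z)
      = (\<integral>\<^sup>+y. emeasure (P (b*u) u ((u/t) powr \<kappa> * b powr \<kappa> * y)) B \<partial>distr (P (c* s1) (c*t) (c powr \<kappa> * z)) borel (\<lambda>y. y / c powr \<kappa>))"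
    by (simp add: ss)
  also have "\<dots> = (\<integral>\<^sup>+y. emeasure (P (b*u) u ((u/t) powr \<kappa> * b powr \<kappa> * (y / c powr \<kappa>))) B \<partial>P (c* s1) (b*u) (c powr \<kappa> * z))"
    unfolding ct
    by (rule nn_integral_distr) (auto simp: measurable_cong_sets[OF sets refl] fm)
  also have "\<dots> = (\<integral>\<^sup>+y. emeasure (P (b*u) u y) B \<partial>P (c* s1) (b*u) (c powr \<kappa> * z))"
    using cp cp0 by (simp add: mult.assoc[symmetric])
  also have "\<dots> = emeasure (P (c* s1) u (c powr \<kappa> * z)) B" using CK by simp
  finally show ?thesis by (simp add: c_def)
qed


theorem proposition2p2:
  fixes \<kappa> :: real
    and P :: "real \<Rightarrow> real \<Rightarrow> real \<Rightarrow> real measure"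
    and G :: "real \<Rightarrow> real \<Rightarrow> real measure"
  assumes kappa_pos: "\<kappa> > 0"
    and P_tf: "transition_function P"
    and P_ss: "self_similar_tf \<kappa> P"
    and P_meas: "\<And>t B. 0 < t \<Longrightarrow> B \<in> sets borel \<Longrightarrow>
        (\<lambda>(s, x). emeasure (P s t x) B) \<in> borel_measurable (restrict_space borel {0<..t} \<Otimes>\<^sub>M borel)"
    and G_prob: "\<And>s t. 0 < s \<Longrightarrow> s \<le> t \<Longrightarrow> prob_space (G s t)"
    and G_sets: "\<And>s t. 0 < s \<Longrightarrow> s \<le> t \<Longrightarrow> sets (G s t) = sets borel"
    and G_supp: "\<And>s t. 0 < s \<Longrightarrow> s \<le> t \<Longrightarrow> emeasure (G s t) {0<..1} = 1"
    and G_diag: "\<And>s. 0 < s \<Longrightarrow> G s s = return borel 1"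
    and G_comp: "\<And>s t u (h :: real \<Rightarrow> real). 0 < s \<Longrightarrow> s \<le> t \<Longrightarrow> t \<le> u \<Longrightarrow>
        h \<in> borel_measurable borel \<Longrightarrow> (\<exists>C. \<forall>y. \<bar>h y\<bar> \<le> C) \<Longrightarrow>
        (\<integral>a. (\<integral>b. h (a * b) \<partial>(G t u)) \<partial>(G s t)) = (\<integral>r. h r \<partial>(G s u))"
  shows "transition_function (Ptil \<kappa> P G)"
proof -
  have Pprob: "prob_space (P s t x)" and Psets: "sets (P s t x) = sets borel"
    if "admissible s x" "s \<le> t" for s t x
    using P_tf that unfolding transition_function_def by auto
  have Pdiag: "P s s x = return borel x" if "admissible s x" for s x
    using P_tf that unfolding transition_function_def by auto
  define \<rho> where "\<rho> r = (if r \<in> {0<..1} then r else 1)" for r :: real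
  have \<rho>0: "0 < \<rho> r" and \<rho>1: "\<rho> r \<le> 1" for r by (auto simp: \<rho>_def)
  have \<rho>m[measurable]: "\<rho> \<in> borel_measurable borel" unfolding \<rho>_def by measurable
  have \<rho>id: "\<rho> r = r" if "0 < r" "r \<le> 1" for r using that by (simp add: \<rho>_def)
  have \<rho>t: "0 < \<rho> r * t \<and> \<rho> r * t \<le> t" if "0 < t" for r t
    using \<rho>0[of r] \<rho>1[of r] that by (simp add: mult_le_cancel_right1)
  define K where "K s t x r = P (\<rho> r * t) t ((t/s) powr \<kappa> * \<rho> r powr \<kappa> * x)" for s t x r
  have Kadm: "admissible (\<rho> r * t) y" if "0 < t" for r t y
    using \<rho>t[OF that, of r] \<rho>0[of r] unfolding admissible_def by auto
  have Kp: "prob_space (K s t x r)" and Ks: "sets (K s t x r) = sets borel" if "0 < t" for s t x r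
    unfolding K_def using Pprob Psets Kadm[OF that] \<rho>t[OF that] by auto
  have Kfin: "emeasure (K s t x r) B \<noteq> \<infinity>" if "0 < t" for s t x r B
  proof -
    interpret prob_space "K s t x r" using Kp[OF that] .
    show ?thesis using emeasure_finite by simp
  qed
  have Km: "(\<lambda>w. emeasure (K s t (fst w) (snd w)) B) \<in> borel_measurable (borel \<Otimes>\<^sub>M borel)"
    if "0 < t" "B \<in> sets borel" for s t B
    unfolding K_def by (rule measP[where P=P and t=t, OF P_meas[OF that]]) (auto simp: \<rho>t[OF that(1)])
  have Km1: "(\<lambda>r. emeasure (K s t x r) B) \<in> borel_measurable borel"
    if "0 < t" "B \<in> sets borel" for s t x B
    unfolding K_def by (rule measP[where P=P and t=t, OF P_meas[OF that]]) (auto simp: \<rho>t[OF that(1)])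
  have Ksub: "K s t x \<in> G s t \<rightarrow>\<^sub>M subprob_algebra borel" if "0 < s" "s \<le> t" for s t x
  proof (rule measurable_subprob_algebra)
    have t0: "0 < t" using that by simp
    show "subprob_space (K s t x a)" for a using Kp[OF t0] by (rule prob_space_imp_subprob_space)
    show "sets (K s t x a) = sets borel" for a using Ks[OF t0] .
    show "(\<lambda>a. emeasure (K s t x a) A) \<in> borel_measurable (G s t)" if "A \<in> sets borel" for A
      unfolding measurable_cong_sets[OF G_sets[OF \<open>0 < s\<close> \<open>s \<le> t\<close>] refl] using Km1[OF t0 that] .
  qed
  have AEG: "AE r in G s t. 0 < r \<and> r \<le> 1" if "0 < s" "s \<le> t" for s t
  proof -
    interpret prob_space "G s t" using G_prob[OF that] .
    have "AE r in G s t. r \<in> {0<..1}"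
      by (subst AE_in_set_eq_1) (auto simp: G_sets[OF that] measure_def G_supp[OF that])
    then show ?thesis by simp
  qed
  have Pt_bind: "Ptil \<kappa> P G s t x = G s t \<bind> K s t x" if "0 < s" "s \<le> t" for s t x
  proof -
    let ?M = "G s t \<bind> K s t x"
    have t0: "0 < t" using that by simp
    have ne: "space (G s t) \<noteq> {}" using prob_space.not_empty[OF G_prob[OF that]] .
    have sM: "sets ?M = sets borel" by (rule sets_bind[OF Ks[OF t0] ne])
    have spM: "space ?M = UNIV" using sets_eq_imp_space_eq[OF sM] by simp
    have eq: "(\<integral>\<^sup>+ r. emeasure (P (r*t) t ((t/s) powr \<kappa> * r powr \<kappa> * x)) A \<partial>G s t) = emeasure ?M A"
      if "A \<in> sets borel" for A
    proof -
      have "emeasure ?M A = (\<integral>\<^sup>+ r. emeasure (K s t x r) A \<partial>G s t)"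
        by (rule emeasure_bind[OF ne Ksub[OF \<open>0 < s\<close> \<open>s \<le> t\<close>] that])
      also have "\<dots> = (\<integral>\<^sup>+ r. emeasure (P (r*t) t ((t/s) powr \<kappa> * r powr \<kappa> * x)) A \<partial>G s t)"
        by (rule nn_integral_cong_AE) (use AEG[OF \<open>0 < s\<close> \<open>s \<le> t\<close>] in \<open>auto simp: K_def \<rho>id\<close>)
      finally show ?thesis by simp
    qed
    have "Ptil \<kappa> P G s t x = measure_of UNIV (sets borel) (emeasure ?M)"
      unfolding Ptil_def using that
      by (simp, intro measure_of_eq) (auto simp: eq sets.sigma_sets_eq[of borel, simplified])
    also have "\<dots> = ?M" using measure_of_of_measure[of ?M] by (simp add: spM sM)
    finally show ?thesis .
  qed
  have Pt_em: "emeasure (Ptil \<kappa> P G s t x) B = (\<integral>\<^sup>+r. emeasure (K s t x r) B \<partial>G s t)"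
    if "0 < s" "s \<le> t" "B \<in> sets borel" for s t x B
    unfolding Pt_bind[OF that(1,2)]
    by (rule emeasure_bind[OF prob_space.not_empty[OF G_prob[OF that(1,2)]] Ksub[OF that(1,2)] that(3)])
  have Pt_meas: "(\<lambda>x. emeasure (Ptil \<kappa> P G s t x) B) \<in> borel_measurable borel"
    if "0 < s" "s \<le> t" "B \<in> sets borel" for s t B
  proof -
    interpret prob_space "G s t" using G_prob[OF that(1,2)] .
    have t0: "0 < t" using that by simp
    have "(\<lambda>x. \<integral>\<^sup>+r. emeasure (K s t x r) B \<partial>G s t) \<in> borel_measurable borel"
      apply (rule borel_measurable_nn_integral)
      using Km[OF t0 that(3), of s]
      by (simp add: measurable_cong_sets[OF sets_pair_measure_cong[OF refl G_sets[OF that(1,2)]] refl] case_prod_beta')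
    then show ?thesis by (simp add: Pt_em[OF that])
  qed
  show ?thesis
    unfolding transition_function_def
  proof (intro conjI; intro allI impI)
    fix s t x :: real assume A: "admissible s x \<and> s \<le> t"
    show "prob_space (Ptil \<kappa> P G s t x) \<and> sets (Ptil \<kappa> P G s t x) = sets borel"
    proof (cases "s = 0")
      case True
      then have "x = 0" using A unfolding admissible_def by auto
      then show ?thesis using True A Pprob[of 0 0 t] Psets[of 0 0 t]
        by (simp add: Ptil_def admissible_def)
    next
      case False
      then have s0: "0 < s" and st: "s \<le> t" using A unfolding admissible_def by auto
      have t0: "0 < t" using s0 st by simp
      interpret prob_space "G s t" using G_prob[OF s0 st] .
      show ?thesis unfolding Pt_bind[OF s0 st]
        by (intro conjI prob_space_bind[OF AE_I2 Ksub[OF s0 st]] sets_bind[OF Ks[OF t0] not_empty] Kp[OF t0])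
    qed
  next
    fix s t :: real and B :: "real set" assume "0 < s \<and> s \<le> t \<and> B \<in> sets borel"
    then show "(\<lambda>x. emeasure (Ptil \<kappa> P G s t x) B) \<in> borel_measurable borel"
      using Pt_meas by auto
  next
    fix s x :: real assume A: "admissible s x"
    show "Ptil \<kappa> P G s s x = return borel x"
    proof (cases "s = 0")
      case True
      then have "x = 0" using A unfolding admissible_def by auto
      then show ?thesis using True Pdiag[of 0 0] by (simp add: Ptil_def admissible_def)
    next
      case False
      then have s0: "0 < s" using A unfolding admissible_def by auto
      have "Ptil \<kappa> P G s s x = return borel 1 \<bind> K s s x"
        using Pt_bind[OF s0 order_refl] G_diag[OF s0] by simp
      also have "\<dots> = K s s x 1"
        using Ksub[OF s0 order_refl, of x] G_diag[OF s0] by (intro bind_return) auto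
      also have "\<dots> = P s s x" using s0 by (simp add: K_def \<rho>_def)
      also have "\<dots> = return borel x" using Pdiag[OF A] .
      finally show ?thesis .
    qed
  next
    fix s t u x :: real and B :: "real set" assume A: "admissible s x \<and> s \<le> t \<and> t \<le> u \<and> B \<in> sets borel"
    then have adm: "admissible s x" and st: "s \<le> t" and tu: "t \<le> u" and B: "B \<in> sets borel" by auto
    have u0: "0 \<le> u" using adm st tu unfolding admissible_def by auto
    show "emeasure (Ptil \<kappa> P G s u x) B = (\<integral>\<^sup>+ y. emeasure (Ptil \<kappa> P G t u y) B \<partial>Ptil \<kappa> P G s t x)"
    proof (cases "s = 0")
      case True
      then have x0: "x = 0" using adm unfolding admissible_def by auto
      have adm0: "admissible 0 0" by (simp add: admissible_def)
      show ?thesis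
      proof (cases "t = 0")
        case True
        have "(\<integral>\<^sup>+ y. emeasure (Ptil \<kappa> P G t u y) B \<partial>Ptil \<kappa> P G s t x)
            = (\<integral>\<^sup>+ y. emeasure (P 0 u 0) B \<partial>return borel (0::real))"
          using \<open>s = 0\<close> True x0 Pdiag[OF adm0] by (simp add: Ptil_def[of \<kappa> P G 0])
        also have "\<dots> = emeasure (P 0 u 0) B" by (simp add: nn_integral_const)
        finally show ?thesis using \<open>s = 0\<close> x0 by (simp add: Ptil_def[of \<kappa> P G 0])
      next
        case False
        then have t0: "0 < t" using st \<open>s = 0\<close> by simp
        interpret GG: prob_space "G t u" using G_prob[OF t0 tu] .
        interpret PP: prob_space "P 0 t 0" using Pprob[OF adm0, of t] t0 by simp
        interpret pair_sigma_finite "P 0 t 0" "G t u"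
          unfolding pair_sigma_finite_def using PP.sigma_finite_measure_axioms GG.sigma_finite_measure_axioms by simp
        have "(\<integral>\<^sup>+ y. emeasure (Ptil \<kappa> P G t u y) B \<partial>Ptil \<kappa> P G s t x)
            = (\<integral>\<^sup>+ y. \<integral>\<^sup>+ b. emeasure (K t u y b) B \<partial>G t u \<partial>P 0 t 0)"
          using \<open>s = 0\<close> x0 by (simp add: Ptil_def[of \<kappa> P G 0] Pt_em[OF t0 tu B])
        also have "\<dots> = (\<integral>\<^sup>+ b. \<integral>\<^sup>+ y. emeasure (K t u y b) B \<partial>P 0 t 0 \<partial>G t u)"
        proof -
          have fm: "(\<lambda>w. emeasure (K t u (fst w) (snd w)) B) \<in> borel_measurable (P 0 t 0 \<Otimes>\<^sub>M G t u)"
            using Km[OF order.strict_trans2[OF t0 tu] B, of t]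
            by (simp add: measurable_cong_sets[OF sets_pair_measure_cong[OF Psets[OF adm0 less_imp_le[OF t0]] G_sets[OF t0 tu]] refl] t0)
          show ?thesis using Fubini[OF fm] by simp
        qed
        also have "\<dots> = (\<integral>\<^sup>+ b. emeasure (P 0 u 0) B \<partial>G t u)"
        proof (rule nn_integral_cong)
          fix b
          show "(\<integral>\<^sup>+ y. emeasure (K t u y b) B \<partial>P 0 t 0) = emeasure (P 0 u 0) B"
          proof -
            have e: "(\<integral>\<^sup>+ y. emeasure (P (\<rho> b * u) u ((u/t) powr \<kappa> * \<rho> b powr \<kappa> * y)) B \<partial>P 0 t 0)
               = emeasure (P (\<rho> b * u / t * 0) u ((\<rho> b * u / t) powr \<kappa> * 0)) B"
              by (rule Lscale[OF P_tf P_ss P_meas adm0 less_imp_le[OF t0] t0 tu \<rho>0[of b] \<rho>1[of b] B])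
            show ?thesis unfolding K_def using e by simp
          qed
        qed
        also have "\<dots> = emeasure (P 0 u 0) B" by (simp add: nn_integral_const GG.emeasure_space_1)
        finally show ?thesis using \<open>s = 0\<close> x0 by (simp add: Ptil_def[of \<kappa> P G 0])
      qed
    next
      case False
      then have s0: "0 < s" using adm unfolding admissible_def by auto
      have t0: "0 < t" using s0 st by simp
      have uu0: "0 < u" using t0 tu by simp
      define h where "h r = enn2real (emeasure (K s u x r) B)" for r
      have hK: "ennreal (h r) = emeasure (K s u x r) B" for r
        unfolding h_def using Kfin[OF uu0] by (simp add: ennreal_enn2real_if)
      have "(\<integral>\<^sup>+ y. emeasure (Ptil \<kappa> P G t u y) B \<partial>Ptil \<kappa> P G s t x)
          = (\<integral>\<^sup>+ a. \<integral>\<^sup>+ y. emeasure (Ptil \<kappa> P G t u y) B \<partial>K s t x a \<partial>G s t)"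
        unfolding Pt_bind[OF s0 st] by (rule nn_integral_bind[OF Pt_meas[OF t0 tu B] Ksub[OF s0 st]])
      also have "\<dots> = (\<integral>\<^sup>+ a. \<integral>\<^sup>+ b. emeasure (P (\<rho> b * u / t * (\<rho> a * t)) u
            ((\<rho> b * u / t) powr \<kappa> * ((t/s) powr \<kappa> * \<rho> a powr \<kappa> * x))) B \<partial>G t u \<partial>G s t)"
      proof (rule nn_integral_cong)
        fix a
        interpret GG: prob_space "G t u" using G_prob[OF t0 tu] .
        interpret PP: prob_space "K s t x a" using Kp[OF t0] .
        interpret pair_sigma_finite "K s t x a" "G t u"
          unfolding pair_sigma_finite_def using PP.sigma_finite_measure_axioms GG.sigma_finite_measure_axioms by simp
        have "(\<integral>\<^sup>+ y. emeasure (Ptil \<kappa> P G t u y) B \<partial>K s t x a)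
            = (\<integral>\<^sup>+ y. \<integral>\<^sup>+ b. emeasure (K t u y b) B \<partial>G t u \<partial>K s t x a)"
          by (simp add: Pt_em[OF t0 tu B])
        also have "\<dots> = (\<integral>\<^sup>+ b. \<integral>\<^sup>+ y. emeasure (K t u y b) B \<partial>K s t x a \<partial>G t u)"
        proof -
          have fm: "(\<lambda>w. emeasure (K t u (fst w) (snd w)) B) \<in> borel_measurable (K s t x a \<Otimes>\<^sub>M G t u)"
            using Km[OF uu0 B, of t]
            by (simp add: measurable_cong_sets[OF sets_pair_measure_cong[OF Ks[OF t0] G_sets[OF t0 tu]] refl])
          show ?thesis using Fubini[OF fm] by simp
        qed
        also have "\<dots> = (\<integral>\<^sup>+ b. emeasure (P (\<rho> b * u / t * (\<rho> a * t)) u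
            ((\<rho> b * u / t) powr \<kappa> * ((t/s) powr \<kappa> * \<rho> a powr \<kappa> * x))) B \<partial>G t u)"
        proof (rule nn_integral_cong)
          fix b
          have adma: "admissible (\<rho> a * t) ((t/s) powr \<kappa> * \<rho> a powr \<kappa> * x)" using Kadm[OF t0] .
          show "(\<integral>\<^sup>+ y. emeasure (K t u y b) B \<partial>K s t x a) = emeasure (P (\<rho> b * u / t * (\<rho> a * t)) u
            ((\<rho> b * u / t) powr \<kappa> * ((t/s) powr \<kappa> * \<rho> a powr \<kappa> * x))) B"
            unfolding K_def
            by (rule Lscale[OF P_tf P_ss P_meas adma conjunct2[OF \<rho>t[OF t0, of a]] t0 tu \<rho>0[of b] \<rho>1[of b] B])
        qed
        finally show "(\<integral>\<^sup>+ y. emeasure (Ptil \<kappa> P G t u y) B \<partial>K s t x a) = (\<integral>\<^sup>+ b. emeasure (P (\<rho> b * u / t * (\<rho> a * t)) u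
            ((\<rho> b * u / t) powr \<kappa> * ((t/s) powr \<kappa> * \<rho> a powr \<kappa> * x))) B \<partial>G t u)" .
      qed
      also have "\<dots> = (\<integral>\<^sup>+ a. \<integral>\<^sup>+ b. ennreal (h (a*b)) \<partial>G t u \<partial>G s t)"
      proof (rule nn_integral_cong_AE)
        show "AE a in G s t. (\<integral>\<^sup>+ b. emeasure (P (\<rho> b * u / t * (\<rho> a * t)) u
            ((\<rho> b * u / t) powr \<kappa> * ((t/s) powr \<kappa> * \<rho> a powr \<kappa> * x))) B \<partial>G t u)
          = (\<integral>\<^sup>+ b. ennreal (h (a*b)) \<partial>G t u)"
          using AEG[OF s0 st]
        proof eventually_elim
          case (elim a)
          show ?case
          proof (rule nn_integral_cong_AE)
            show "AE b in G t u. emeasure (P (\<rho> b * u / t * (\<rho> a * t)) u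
              ((\<rho> b * u / t) powr \<kappa> * ((t/s) powr \<kappa> * \<rho> a powr \<kappa> * x))) B = ennreal (h (a*b))"
              using AEG[OF t0 tu]
            proof eventually_elim
              case (elim b)
              have ab0: "0 < a*b" and ab1: "a * b \<le> 1" using elim \<open>0 < a \<and> a \<le> 1\<close>
                by (auto simp: mult_le_one)
              have e1: "b * u / t * (a * t) = a * b * u" using t0 by (simp add: field_simps)
              have "(b * u / t) powr \<kappa> * (t/s) powr \<kappa> * a powr \<kappa> = (b * u / t * (t/s) * a) powr \<kappa>"
              proof -
                have q1: "(b * u / t * (t/s) * a) powr \<kappa> = (b * u / t * (t/s)) powr \<kappa> * a powr \<kappa>"
                  by (rule powr_mult; use elim \<open>0 < a \<and> a \<le> 1\<close> t0 s0 u0 in auto)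
                have q2: "(b * u / t * (t/s)) powr \<kappa> = (b * u / t) powr \<kappa> * (t/s) powr \<kappa>"
                  by (rule powr_mult; use elim t0 s0 u0 in auto)
                show ?thesis by (simp only: q1 q2)
              qed
              also have "b * u / t * (t/s) * a = (u/s) * (a*b)" using t0 by (simp add: field_simps)
              also have "((u/s) * (a*b)) powr \<kappa> = (u/s) powr \<kappa> * (a*b) powr \<kappa>"
                by (rule powr_mult; use ab0 s0 u0 in auto)
              finally have e2: "(b * u / t) powr \<kappa> * ((t/s) powr \<kappa> * a powr \<kappa> * x) = (u/s) powr \<kappa> * (a*b) powr \<kappa> * x"
                by (simp add: mult.assoc)
              have r: "\<rho> a = a" "\<rho> b = b" "\<rho> (a*b) = a*b"
                using elim \<open>0 < a \<and> a \<le> 1\<close> ab0 ab1 by (simp_all add: \<rho>id)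
              show ?case by (simp only: hK K_def r e1 e2)
            qed
          qed
        qed
      qed
      also have "\<dots> = (\<integral>\<^sup>+ r. ennreal (h r) \<partial>G s u)"
      proof (rule GN[OF G_prob[OF s0 st] G_prob[OF t0 tu] G_prob[OF s0 order.trans[OF st tu]]
            G_sets[OF s0 st] G_sets[OF t0 tu] G_sets[OF s0 order.trans[OF st tu]]])
        show hm: "h \<in> borel_measurable borel" unfolding h_def using Km1[OF uu0 B] by measurable
        have hb: "0 \<le> h y \<and> h y \<le> 1" for y
        proof -
          interpret prob_space "K s u x y" using Kp[OF uu0] .
          show ?thesis unfolding h_def by (simp add: emeasure_eq_measure)
        qed
        then show "0 \<le> h y" "h y \<le> 1" for y by auto
        show "(\<integral>a. (\<integral>b. h (a*b) \<partial>G t u) \<partial>G s t) = (\<integral>r. h r \<partial>G s u)"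
          by (rule G_comp[OF s0 st tu hm]) (use hb in \<open>auto intro!: exI[of _ 1]\<close>)
      qed
      also have "\<dots> = (\<integral>\<^sup>+ r. emeasure (K s u x r) B \<partial>G s u)" by (simp add: hK)
      also have "\<dots> = emeasure (Ptil \<kappa> P G s u x) B"
        by (rule Pt_em[OF s0 order.trans[OF st tu] B, symmetric])
      finally show ?thesis by simp
    qed
  qed
qed

end
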